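(* Let $G$ be a connected graph on $n$ vertices with independence number $\beta$. Then $$ABC(G)\leq \beta(n-\beta)\sqrt{\frac{2n-\beta-3}{(n-\beta)(n-1)}}+\frac{(n-\beta)(n-\beta-1)}{2}\sqrt{\frac{2n-4}{(n-1)(n-1)}},$$ with equality if and only if $G\cong \overline{K_{\beta}}\vee K_{n-\beta}$.
   Context: For a simple graph $G$, $ABC(G)=\sum_{uv\in E(G)}\sqrt{\frac{d(u)+d(v)-2}{d(u)d(v)}}$, where $d(u)$ is the degree of $u$. The independence number is the size of a largest set of pairwise nonadjacent vertices. $\overline{K_\beta}$ is the edgeless graph on $\beta$ vertices, $K_r$ the complete graph on $r$ vertices, and $G\vee H$ (join) is the graph on $V(G)\cup V(H)$ (disjoint) with edge set $E(G)\cup E(H)\cup\{xy: x\in V(G), y\in V(H)\}$. *)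

theory Defs
  imports Complex_Main
begin

definition simple_graph :: "'a set \<Rightarrow> 'a set set \<Rightarrow> bool" where
  "simple_graph V E \<longleftrightarrow> finite V \<and>
     (\<forall>e\<in>E. \<exists>u v. u \<noteq> v \<and> u \<in> V \<and> v \<in> V \<and> e = {u, v})"

definition adj :: "'a set set \<Rightarrow> 'a \<Rightarrow> 'a \<Rightarrow> bool" where
  "adj E u v \<longleftrightarrow> {u, v} \<in> E"

definition degree :: "'a set set \<Rightarrow> 'a \<Rightarrow> nat" where
  "degree E v = card {e \<in> E. v \<in> e}"

definition connected_graph :: "'a set \<Rightarrow> 'a set set \<Rightarrow> bool" where
  "connected_graph V E \<longleftrightarrow> V \<noteq> {} \<and> (\<forall>u\<in>V. \<forall>v\<in>V. (adj E)\<^sup>*\<^sup>* u v)"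

text \<open>Atom-bond connectivity index; for an edge e = {u,v}, the sum over e of degrees is
  d(u)+d(v) and the product is d(u)d(v).\<close>
definition ABC :: "'a set set \<Rightarrow> real" where
  "ABC E = (\<Sum>e\<in>E. sqrt (((\<Sum>v\<in>e. real (degree E v)) - 2) / (\<Prod>v\<in>e. real (degree E v))))"

definition independent_set :: "'a set \<Rightarrow> 'a set set \<Rightarrow> 'a set \<Rightarrow> bool" where
  "independent_set V E S \<longleftrightarrow> S \<subseteq> V \<and> (\<forall>u\<in>S. \<forall>v\<in>S. \<not> adj E u v)"

definition independence_number :: "'a set \<Rightarrow> 'a set set \<Rightarrow> nat" where
  "independence_number V E = Max (card ` {S. independent_set V E S})"

definition graph_iso :: "'a set \<Rightarrow> 'a set set \<Rightarrow> 'b set \<Rightarrow> 'b set set \<Rightarrow> bool" where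
  "graph_iso V E V' E' \<longleftrightarrow> (\<exists>f. bij_betw f V V' \<and>
     (\<forall>u\<in>V. \<forall>v\<in>V. {u, v} \<in> E \<longleftrightarrow> {f u, f v} \<in> E'))"

definition empty_graph_V :: "nat \<Rightarrow> nat set" where "empty_graph_V b = {0..<b}"
definition empty_graph_E :: "nat \<Rightarrow> nat set set" where "empty_graph_E b = {}"
definition complete_graph_V :: "nat \<Rightarrow> nat set" where "complete_graph_V r = {0..<r}"
definition complete_graph_E :: "nat \<Rightarrow> nat set set" where
  "complete_graph_E r = {{u, v} | u v. u < r \<and> v < r \<and> u \<noteq> v}"

definition join_V :: "'a set \<Rightarrow> 'b set \<Rightarrow> ('a + 'b) set" where
  "join_V V1 V2 = Inl ` V1 \<union> Inr ` V2"
definition join_E :: "'a set \<Rightarrow> 'a set set \<Rightarrow> 'b set \<Rightarrow> 'b set set \<Rightarrow> ('a + 'b) set set" where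
  "join_E V1 E1 V2 E2 = (image Inl) ` E1 \<union> (image Inr) ` E2 \<union>
     {{Inl x, Inr y} | x y. x \<in> V1 \<and> y \<in> V2}"

end

theory Submission
  imports Defs
begin


definition Fw :: "real \<Rightarrow> real \<Rightarrow> real" where "Fw x y = sqrt ((x + y - 2) / (x * y))"

lemma loss2:
  fixes a y :: real assumes a: "a \<ge> 1" and y: "y \<ge> 2"
  shows "Fw a y - Fw (a+1) y \<le> 1/sqrt a - 1/sqrt (a+1)"
proof -
  define X where "X = Fw a y" define Y where "Y = Fw (a+1) y"
  define P where "P = 1/sqrt a" define Q where "Q = 1/sqrt (a+1)"
  define s where "s = (y-2)/y"
  have s0: "s \<ge> 0" "s < 1" using y by (auto simp: s_def field_simps)
  have gX: "(a+y-2)/(a*y) \<ge> 0" "(a+1+y-2)/((a+1)*y) \<ge> 0" using a y by auto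
  have X2: "X^2 = (a+y-2)/(a*y)" using gX by (simp add: X_def Fw_def)
  have Y2: "Y^2 = (a+1+y-2)/((a+1)*y)" using gX by (simp add: Y_def Fw_def)
  have P2: "P^2 = 1/a" using a by (simp add: P_def power_divide)
  have Q2: "Q^2 = 1/(a+1)" using a by (simp add: Q_def power_divide)
  have Xp: "X \<ge> 0" "Y \<ge> 0" "P > 0" "Q > 0" using a gX by (auto simp: X_def Y_def P_def Q_def Fw_def)
  have diff: "X^2 - Y^2 = s * (P^2 - Q^2)"
    proof -
    have nz: "a \<noteq> 0" "a+1 \<noteq> 0" "y \<noteq> 0" using a y by auto
    have "(a+y-2)/(a*y) - (a+1+y-2)/((a+1)*y) = (y-2)/y * (1/a - 1/(a+1))"
      using a y by (simp add: divide_simps) (simp add: algebra_simps)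
    then show ?thesis unfolding X2 Y2 P2 Q2 s_def .
  qed
  have PQ: "Q \<le> P" using a unfolding P_def Q_def by (simp add: field_simps)
  have sx: "(s*P)^2 \<le> X^2"
  proof -
    have "(s*P)^2 = ((y-2)/y)^2 / a" unfolding power_mult_distrib P2 by (simp add: s_def)
    also have "\<dots> \<le> (a+y-2)/(a*y)"
    proof -
      have "a*y \<ge> 1*2" using mult_mono[of 1 a 2 y] a y by simp
      then have "(y-2)^2 \<le> y*(a+y-2)" using a y by (simp add: power2_eq_square algebra_simps)
      then have "(y-2)^2/(y*y*(a)) \<le> (y*(a+y-2))/(y*y*(a))" using a y by (intro divide_right_mono) auto
      moreover have "((y-2)/y)^2/(a) = (y-2)^2/(y*y*(a))" by (simp add: power_divide power2_eq_square)
      moreover have "(a+y-2)/((a)*y) = (y*(a+y-2))/(y*y*(a))" using a y by (simp add: field_simps)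
      ultimately show ?thesis by simp
    qed
    finally show ?thesis using X2 by simp
  qed
  have sy: "(s*Q)^2 \<le> Y^2"
  proof -
    have "(s*Q)^2 = ((y-2)/y)^2 / (a+1)" unfolding power_mult_distrib Q2 by (simp add: s_def)
    also have "\<dots> \<le> (a+1+y-2)/((a+1)*y)"
    proof -
      have "a*y \<ge> 1*2" using mult_mono[of 1 a 2 y] a y by simp
      then have "(y-2)^2 \<le> y*(a+1+y-2)" using a y by (simp add: power2_eq_square algebra_simps)
      then have "(y-2)^2/(y*y*(a+1)) \<le> (y*(a+1+y-2))/(y*y*(a+1))" using a y by (intro divide_right_mono) auto
      moreover have "((y-2)/y)^2/(a+1) = (y-2)^2/(y*y*(a+1))" by (simp add: power_divide power2_eq_square)
      moreover have "(a+1+y-2)/((a+1)*y) = (y*(a+1+y-2))/(y*y*(a+1))" using a y by (simp add: divide_simps)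
      ultimately show ?thesis by simp
    qed
    finally show ?thesis using Y2 by simp
  qed
  have sX: "s*P \<le> X" using sx Xp s0 by (meson mult_nonneg_nonneg less_imp_le power2_le_imp_le)
  have sY: "s*Q \<le> Y" using sy Xp s0 by (meson mult_nonneg_nonneg less_imp_le power2_le_imp_le)
  have "X - Y \<le> P - Q"
  proof (cases "X \<le> Y")
    case True then show ?thesis using PQ by simp
  next
    case False
    have "(X - Y) * (X + Y) = s * ((P - Q) * (P + Q))" using diff by (simp add: power2_eq_square algebra_simps)
    moreover have "s * (P+Q) \<le> X + Y" using sX sY by (simp add: algebra_simps)
    moreover have "X + Y > 0" using False Xp by simp
    ultimately have h1: "(X - Y) * (X + Y) = (P - Q) * (s * (P + Q))" "s * (P+Q) \<le> X + Y" "X + Y > 0"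
      by (auto simp: algebra_simps)
    have "(P - Q) * (s * (P + Q)) \<le> (P - Q) * (X + Y)" using h1(2) PQ by (intro mult_left_mono) auto
    then have "(X - Y) * (X + Y) \<le> (P - Q) * (X + Y)" using h1(1) by simp
    then show ?thesis using h1(3) by (simp add: mult_le_cancel_right)
  qed
  then show ?thesis by (simp add: X_def Y_def P_def Q_def)
qed


lemma loss1:
  fixes a :: real assumes a: "a \<ge> 1"
  shows "Fw a 1 - Fw (a+1) 1 \<le> 1/sqrt a - 1/sqrt (a+1)"
proof -
  have "(a-1)*(a+1) \<le> a*a" by (simp add: algebra_simps)
  then have "(a + 1 - 2) / (a * 1) \<le> (a + 1 + 1 - 2) / ((a+1) * 1)" using a by (simp add: divide_simps)
  then have "Fw a 1 \<le> Fw (a+1) 1" unfolding Fw_def by (rule real_sqrt_le_mono)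
  moreover have "1/sqrt (a+1) \<le> 1/sqrt a" using a by (simp add: divide_simps)
  ultimately show ?thesis by simp
qed

lemma sumbound:
  fixes a :: real assumes a: "a \<ge> 1"
  shows "a * (1/sqrt a - 1/sqrt (a+1)) < 1/(2*sqrt (a+1))"
proof -
  define P where "P = sqrt a" define Q where "Q = sqrt (a+1)"
  have P: "P > 0" "P^2 = a" and Q: "Q > 0" "Q^2 = a+1" using a by (auto simp: P_def Q_def)
  have PQ: "P < Q" using a by (simp add: P_def Q_def)
  have "a * (1/P - 1/Q) = P - P^2/Q" using P Q by (simp add: field_simps power2_eq_square)
  also have "\<dots> < 1/(2*Q)"
  proof -
    have "(Q - P) * (Q + P) = 1" using P Q by (simp add: algebra_simps power2_eq_square)
    have "2 * P * (Q - P) < (Q + P) * (Q - P)" using PQ P by (intro mult_strict_right_mono) auto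
    also have "\<dots> = 1" using P Q by (simp add: algebra_simps power2_eq_square)
    finally have "2*P*Q - 2*P^2 < 1" by (simp add: algebra_simps power2_eq_square)
    then have "(P*Q - P^2)/Q < (1/2)/Q" using Q by (intro divide_strict_right_mono) (auto simp: algebra_simps)
    moreover have "P - P^2/Q = (P*Q - P^2)/Q" using Q by (simp add: field_simps)
    ultimately show ?thesis by simp
  qed
  finally show ?thesis by (simp add: P_def Q_def)
qed

lemma newedge:
  fixes a b :: real assumes a: "a \<ge> 1" and b: "b \<ge> 1"
  shows "1/(2*sqrt (a+1)) + 1/(2*sqrt (b+1)) \<le> Fw (a+1) (b+1)"
proof -
  define P where "P = sqrt (a+1)" define Q where "Q = sqrt (b+1)"
  have P: "P > 0" "P^2 = a+1" and Q: "Q > 0" "Q^2 = b+1" using a b by (auto simp: P_def Q_def)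
  have "0 \<le> (P - Q)^2" by simp
  then have k: "(P+Q)^2 \<le> 4 * (P^2+Q^2-2)" using P Q a b by (simp add: power2_eq_square algebra_simps)
  have "1/(2*P) + 1/(2*Q) = (P+Q)/(2*P*Q)" using P Q by (simp add: field_simps)
  then have "(1/(2*P) + 1/(2*Q))^2 = (P+Q)^2 / (4*(P^2*Q^2))" by (simp add: power_divide power_mult_distrib)
  also have "\<dots> \<le> 4 * (P^2+Q^2-2) / (4*(P^2*Q^2))" using k P Q a b by (intro divide_right_mono) auto
  also have "\<dots> = (a+1+(b+1)-2)/((a+1)*(b+1))" using P Q a b by (simp add: divide_simps)
  finally have "1/(2*P) + 1/(2*Q) \<le> sqrt ((a+1+(b+1)-2)/((a+1)*(b+1)))" using P Q
    by (intro real_le_rsqrt) auto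
  then show ?thesis by (simp add: Fw_def P_def Q_def)
qed

definition wt :: "('a \<Rightarrow> nat) \<Rightarrow> 'a set \<Rightarrow> real" where
  "wt D e = sqrt (((\<Sum>v\<in>e. real (D v)) - 2) / (\<Prod>v\<in>e. real (D v)))"

lemma ABC_wt: "ABC E = (\<Sum>e\<in>E. wt (degree E) e)"
  unfolding ABC_def wt_def by simp

lemma wt_pair: "x \<noteq> y \<Longrightarrow> wt D {x,y} = Fw (real (D x)) (real (D y))"
  unfolding wt_def Fw_def by simp

lemma sg_finite: "simple_graph V E \<Longrightarrow> finite E"
proof -
  assume s: "simple_graph V E"
  have "e \<subseteq> V" if h: "e \<in> E" for e
  proof -
    obtain u v where "u \<in> V" "v \<in> V" "e = {u,v}" using s h unfolding simple_graph_def by meson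
    then show ?thesis by simp
  qed
  then have "E \<subseteq> Pow V" by blast
  moreover have "finite V" using s unfolding simple_graph_def by simp
  ultimately show ?thesis by (meson finite_Pow_iff finite_subset)
qed

lemma sg_edge: "simple_graph V E \<Longrightarrow> e \<in> E \<Longrightarrow> \<exists>u v. u \<noteq> v \<and> u \<in> V \<and> v \<in> V \<and> e = {u,v}"
  unfolding simple_graph_def by blast

lemma degree_pos: "simple_graph V E \<Longrightarrow> e \<in> E \<Longrightarrow> x \<in> e \<Longrightarrow> degree E x \<ge> 1"
proof -
  assume s: "simple_graph V E" "e \<in> E" "x \<in> e"
  have "finite {e \<in> E. x \<in> e}" using sg_finite[OF s(1)] by simp
  moreover have "e \<in> {e \<in> E. x \<in> e}" using s by simp
  ultimately have "card {e \<in> E. x \<in> e} \<noteq> 0" by auto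
  then show ?thesis unfolding degree_def by simp
qed

lemma degree_insert:
  assumes "simple_graph V E" "e \<notin> E"
  shows "degree (insert e E) x = degree E x + (if x \<in> e then 1 else 0)"
proof -
  have f: "finite {f \<in> E. x \<in> f}" using sg_finite[OF assms(1)] by simp
  show ?thesis
  proof (cases "x \<in> e")
    case True
    then have "{f \<in> insert e E. x \<in> f} = insert e {f \<in> E. x \<in> f}" by auto
    then show ?thesis using True f assms(2) unfolding degree_def by simp
  next
    case False
    then have "{f \<in> insert e E. x \<in> f} = {f \<in> E. x \<in> f}" by auto
    then show ?thesis using False unfolding degree_def by simp
  qed
qed

lemma loss_edge:
  assumes s: "simple_graph V E" and uv: "u \<noteq> v" "{u,v} \<notin> E" and f: "f \<in> E" "u \<in> f"
  shows "v \<notin> f \<and> wt (degree E) f - wt (degree (insert {u,v} E)) f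
     \<le> 1/sqrt (real (degree E u)) - 1/sqrt (real (degree E u) + 1)"
proof -
  obtain p q where pq: "p \<noteq> q" "f = {p,q}" using sg_edge[OF s f(1)] by blast
  obtain x where x: "f = {u,x}" "x \<noteq> u" using pq f(2) by auto
  have xv: "x \<noteq> v" using x f(1) uv by auto
  have vf: "v \<notin> f" using x xv uv by auto
  let ?d = "degree E" let ?d' = "degree (insert {u,v} E)"
  have du: "?d' u = ?d u + 1" using degree_insert[OF s uv(2)] by simp
  have dx: "?d' x = ?d x" using degree_insert[OF s uv(2)] x xv by simp
  have a: "real (?d u) \<ge> 1" using degree_pos[OF s f] by simp
  have y: "?d x \<ge> 1" using degree_pos[OF s f(1)] x by simp
  have "wt ?d f - wt ?d' f = Fw (real (?d u)) (real (?d x)) - Fw (real (?d u) + 1) (real (?d x))"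
  proof -
    have du_r: "real (?d' u) = real (?d u) + 1" using du by simp
    have "wt ?d' f = Fw (real (?d u) + 1) (real (?d x))"
      using wt_pair[OF x(2)[symmetric], of ?d'] unfolding du_r dx x .
    moreover have "wt ?d f = Fw (real (?d u)) (real (?d x))"
      using wt_pair[OF x(2)[symmetric], of ?d] unfolding x .
    ultimately show ?thesis by simp
  qed
  also have "\<dots> \<le> 1/sqrt (real (?d u)) - 1/sqrt (real (?d u) + 1)"
  proof (cases "?d x = 1")
    case True then show ?thesis using loss1[OF a] by simp
  next
    case False then have "real (?d x) \<ge> 2" using y by simp
    then show ?thesis using loss2[OF a] by simp
  qed
  finally show ?thesis using vf by simp
qed

lemma abc_add_edge:
  assumes s: "simple_graph V E" and uv: "u \<noteq> v" "{u,v} \<notin> E"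
    and du: "degree E u \<ge> 1" and dv: "degree E v \<ge> 1"
  shows "ABC E < ABC (insert {u,v} E)"
proof -
  let ?d = "degree E" let ?d' = "degree (insert {u,v} E)"
  define a where "a = real (?d u)" define b where "b = real (?d v)"
  define da where "da = 1/sqrt a - 1/sqrt (a+1)"
  define db where "db = 1/sqrt b - 1/sqrt (b+1)"
  have fin: "finite E" using sg_finite[OF s] .
  have a1: "a \<ge> 1" "b \<ge> 1" using du dv by (auto simp: a_def b_def)
  have pw: "wt ?d f \<le> wt ?d' f + ((if u \<in> f then da else 0) + (if v \<in> f then db else 0))"
    if "f \<in> E" for f
  proof (cases "u \<in> f")
    case True
    then show ?thesis using loss_edge[OF s uv that True] by (simp add: da_def a_def)
  next
    case False
    show ?thesis
    proof (cases "v \<in> f")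
      case True
      have "{v,u} \<notin> E" using uv by (simp add: insert_commute)
      from loss_edge[OF s uv(1)[symmetric] this that True]
      show ?thesis using False True by (simp add: db_def b_def insert_commute)
    next
      case False2: False
      have "?d' w = ?d w" if "w \<in> f" for w using degree_insert[OF s uv(2)] False False2 that by auto
      then have "(\<Sum>w\<in>f. real (?d' w)) = (\<Sum>w\<in>f. real (?d w))"
        "(\<Prod>w\<in>f. real (?d' w)) = (\<Prod>w\<in>f. real (?d w))"
        by (auto intro: sum.cong prod.cong)
      then have "wt ?d' f = wt ?d f" unfolding wt_def by simp
      then show ?thesis using False False2 by simp
    qed
  qed
  have "ABC E = (\<Sum>f\<in>E. wt ?d f)" by (rule ABC_wt)
  also have "\<dots> \<le> (\<Sum>f\<in>E. wt ?d' f + ((if u \<in> f then da else 0) + (if v \<in> f then db else 0)))"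
    using pw by (rule sum_mono)
  also have "\<dots> = (\<Sum>f\<in>E. wt ?d' f) + (\<Sum>f\<in>E. if u \<in> f then da else 0) + (\<Sum>f\<in>E. if v \<in> f then db else 0)"
    by (simp add: sum.distrib)
  also have "(\<Sum>f\<in>E. if u \<in> f then da else 0) = a * da"
    using sum.inter_filter[OF fin, of "\<lambda>_. da" "\<lambda>f. u \<in> f"] by (simp add: a_def degree_def)
  also have "(\<Sum>f\<in>E. if v \<in> f then db else 0) = b * db"
    using sum.inter_filter[OF fin, of "\<lambda>_. db" "\<lambda>f. v \<in> f"] by (simp add: b_def degree_def)
  finally have 1: "ABC E \<le> (\<Sum>f\<in>E. wt ?d' f) + a * da + b * db" .
  have "a * da + b * db < 1/(2*sqrt (a+1)) + 1/(2*sqrt (b+1))"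
    using add_strict_mono[OF sumbound[OF a1(1)] sumbound[OF a1(2)]] unfolding da_def db_def .
  also have "\<dots> \<le> Fw (a+1) (b+1)" using newedge[OF a1] .
  also have "\<dots> = wt ?d' {u,v}"
  proof -
    have "real (?d' u) = a + 1" "real (?d' v) = b + 1"
      using degree_insert[OF s uv(2), of u] degree_insert[OF s uv(2), of v] by (simp_all add: a_def b_def)
    then show ?thesis using wt_pair[OF uv(1), of ?d'] by simp
  qed
  finally have 2: "a * da + b * db < wt ?d' {u,v}" .
  have "ABC (insert {u,v} E) = wt ?d' {u,v} + (\<Sum>f\<in>E. wt ?d' f)"
    using ABC_wt[of "insert {u,v} E"] fin uv by simp
  then show ?thesis using 1 2 by simp
qed


lemma abc_mono_full:
  assumes F: "simple_graph V F"
  shows "simple_graph V E \<Longrightarrow> E \<subseteq> F \<Longrightarrow> \<forall>x\<in>V. degree E x \<ge> 1 \<Longrightarrow> E \<noteq> F \<Longrightarrow> ABC E < ABC F"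
proof (induction "card (F - E)" arbitrary: E rule: less_induct)
  case less
  have finF: "finite F" using sg_finite[OF F] .
  obtain e where e: "e \<in> F" "e \<notin> E" using less.prems by blast
  obtain u v where uv: "u \<noteq> v" "u \<in> V" "v \<in> V" "e = {u,v}" using sg_edge[OF F e(1)] by blast
  define E1 where "E1 = insert e E"
  have sg1: "simple_graph V E1"
    using less.prems(1) uv unfolding simple_graph_def E1_def by blast
  have deg1: "\<forall>x\<in>V. degree E1 x \<ge> 1"
    using less.prems(3) degree_insert[OF less.prems(1) e(2)] unfolding E1_def by simp
  have lt: "ABC E < ABC E1"
    unfolding E1_def uv(4)
    by (rule abc_add_edge[OF less.prems(1) uv(1)]) (use e uv less.prems(3) in auto)
  show ?case
  proof (cases "E1 = F")
    case True then show ?thesis using lt by simp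
  next
    case False
    have sub: "E1 \<subseteq> F" using less.prems(2) e unfolding E1_def by blast
    have "F - E1 \<subset> F - E" using e unfolding E1_def by blast
    then have "card (F - E1) < card (F - E)" using finF by (meson finite_Diff psubset_card_mono)
    from less.hyps[OF this sg1 sub deg1 False] show ?thesis using lt by simp
  qed
qed

lemma conn_deg:
  assumes s: "simple_graph V E" and c: "connected_graph V E" and x: "x \<in> V" and y: "y \<in> V" "x \<noteq> y"
  shows "degree E x \<ge> 1"
proof -
  have "(adj E)\<^sup>*\<^sup>* x y" using c x y unfolding connected_graph_def by blast
  then show ?thesis
  proof (cases rule: converse_rtranclpE)
    case base then show ?thesis using y by simp
  next
    case (step z)
    then have "{x,z} \<in> E" by (simp add: adj_def)
    then show ?thesis using degree_pos[OF s] by blast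
  qed
qed

lemma indep_max:
  assumes s: "simple_graph V E"
  shows "\<exists>S. independent_set V E S \<and> card S = independence_number V E"
proof -
  have fin: "finite {S. independent_set V E S}"
  proof -
    have "{S. independent_set V E S} \<subseteq> Pow V" unfolding independent_set_def by blast
    moreover have "finite V" using s unfolding simple_graph_def by simp
    ultimately show ?thesis by (meson finite_Pow_iff finite_subset)
  qed
  have ne: "{} \<in> {S. independent_set V E S}" unfolding independent_set_def by simp
  have "independence_number V E \<in> card ` {S. independent_set V E S}"
    unfolding independence_number_def using fin ne by (intro Max_in) auto
  then show ?thesis by auto
qed

definition full_split :: "'a set \<Rightarrow> 'a set \<Rightarrow> 'a set set" where
  "full_split V S = {{x,y} | x y. x \<in> V \<and> y \<in> V \<and> x \<noteq> y \<and> \<not> (x \<in> S \<and> y \<in> S)}"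

lemma sg_full: "finite V \<Longrightarrow> simple_graph V (full_split V S)"
  unfolding simple_graph_def full_split_def by blast

lemma E_sub_full:
  assumes s: "simple_graph V E" and i: "independent_set V E S"
  shows "E \<subseteq> full_split V S"
proof
  fix e assume e: "e \<in> E"
  obtain u v where uv: "u \<noteq> v" "u \<in> V" "v \<in> V" "e = {u,v}" using sg_edge[OF s e] by blast
  have "\<not> (u \<in> S \<and> v \<in> S)" using i e uv unfolding independent_set_def adj_def by blast
  then show "e \<in> full_split V S" using uv unfolding full_split_def by blast
qed

lemma deg_full_S:
  assumes "finite V" "S \<subseteq> V" "x \<in> S"
  shows "degree (full_split V S) x = card (V - S)"
proof -
  have "{e \<in> full_split V S. x \<in> e} = (\<lambda>y. {x,y}) ` (V - S)"
    using assms unfolding full_split_def by (auto simp: doubleton_eq_iff)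
  moreover have "inj_on (\<lambda>y. {x,y}) (V - S)" using assms unfolding inj_on_def by (auto simp: doubleton_eq_iff)
  ultimately show ?thesis unfolding degree_def by (simp add: card_image)
qed

lemma deg_full_T:
  assumes "finite V" "S \<subseteq> V" "x \<in> V - S"
  shows "degree (full_split V S) x = card V - 1"
proof -
  have "{e \<in> full_split V S. x \<in> e} = (\<lambda>y. {x,y}) ` (V - {x})"
    using assms unfolding full_split_def by (auto simp: doubleton_eq_iff)
  moreover have "inj_on (\<lambda>y. {x,y}) (V - {x})" unfolding inj_on_def by (auto simp: doubleton_eq_iff)
  ultimately show ?thesis unfolding degree_def using assms by (simp add: card_image)
qed



lemma full_mem:
  assumes "u \<in> V" "v \<in> V"
  shows "{u,v} \<in> full_split V S \<longleftrightarrow> u \<noteq> v \<and> \<not> (u \<in> S \<and> v \<in> S)"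
  using assms unfolding full_split_def by (auto simp: doubleton_eq_iff)

lemma ABC_full:
  assumes fin: "finite V" and S: "S \<subseteq> V"
  shows "ABC (full_split V S) = real (card S) * real (card (V - S)) * Fw (real (card (V - S))) (real (card V - 1))
     + real (card (V - S) choose 2) * Fw (real (card V - 1)) (real (card V - 1))"
proof -
  define T where "T = V - S"
  define Ef where "Ef = full_split V S"
  define A where "A = (\<lambda>p. {fst p, snd p}) ` (S \<times> T)"
  define B where "B = {e. e \<subseteq> T \<and> card e = 2}"
  have finS: "finite S" "finite T" using fin S finite_subset unfolding T_def by auto
  have EfAB: "Ef = A \<union> B"
  proof
    show "Ef \<subseteq> A \<union> B"
    proof
      fix e assume "e \<in> Ef"
      then obtain x y where xy: "e = {x,y}" "x \<in> V" "y \<in> V" "x \<noteq> y" "\<not> (x \<in> S \<and> y \<in> S)"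
        unfolding Ef_def full_split_def by blast
      show "e \<in> A \<union> B"
      proof (cases "x \<in> S")
        case True
        then have "(x,y) \<in> S \<times> T" using xy unfolding T_def by auto
        from imageI[OF this, of "\<lambda>p. {fst p, snd p}"] show ?thesis unfolding A_def xy(1) by simp
      next
        case F1: False
        show ?thesis
        proof (cases "y \<in> S")
          case True
          then have "(y,x) \<in> S \<times> T" using xy F1 unfolding T_def by auto
          from imageI[OF this, of "\<lambda>p. {fst p, snd p}"] show ?thesis unfolding A_def xy(1) by (simp add: insert_commute)
        next
          case False
          then have "e \<subseteq> T" "card e = 2" using xy F1 unfolding T_def by auto
          then show ?thesis unfolding B_def by blast
        qed
      qed
    qed
  next
    show "A \<union> B \<subseteq> Ef"
    proof
      fix e assume "e \<in> A \<union> B"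
      then show "e \<in> Ef"
      proof
        assume "e \<in> A"
        then obtain x y where "x \<in> S" "y \<in> T" "e = {x,y}" unfolding A_def by auto
        then show ?thesis unfolding Ef_def using full_mem[of x V y S] S unfolding T_def by auto
      next
        assume "e \<in> B"
        then obtain x y where "e = {x,y}" "x \<noteq> y" "e \<subseteq> T" unfolding B_def by (auto simp: card_2_iff)
        then show ?thesis unfolding Ef_def using full_mem[of x V y S] unfolding T_def by auto
      qed
    qed
  qed
  have disj: "A \<inter> B = {}" unfolding A_def B_def T_def by auto
  have finAB: "finite A" "finite B" using finS unfolding A_def B_def by auto
  have injA: "inj_on (\<lambda>p. {fst p, snd p}) (S \<times> T)"
    unfolding inj_on_def T_def by (auto simp: doubleton_eq_iff)
  let ?d = "degree Ef"
  have dS: "?d x = card T" if "x \<in> S" for x using deg_full_S[OF fin S that] unfolding Ef_def T_def .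
  have dT: "?d x = card V - 1" if "x \<in> T" for x using deg_full_T[OF fin S] that unfolding Ef_def T_def by blast
  have "(\<Sum>e\<in>A. wt ?d e) = (\<Sum>p\<in>S \<times> T. wt ?d {fst p, snd p})"
    unfolding A_def using injA by (simp add: sum.reindex)
  also have "\<dots> = (\<Sum>p\<in>S \<times> T. Fw (real (card T)) (real (card V - 1)))"
  proof (rule sum.cong)
    fix p assume p: "p \<in> S \<times> T"
    then have "fst p \<noteq> snd p" unfolding T_def by auto
    then show "wt ?d {fst p, snd p} = Fw (real (card T)) (real (card V - 1))"
      using p dS[of "fst p"] dT[of "snd p"] by (simp add: wt_pair mem_Times_iff)
  qed simp
  also have "\<dots> = real (card S) * real (card T) * Fw (real (card T)) (real (card V - 1))"
    by (simp add: card_cartesian_product)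
  finally have SA: "(\<Sum>e\<in>A. wt ?d e) = real (card S) * real (card T) * Fw (real (card T)) (real (card V - 1))" .
  have "(\<Sum>e\<in>B. wt ?d e) = (\<Sum>e\<in>B. Fw (real (card V - 1)) (real (card V - 1)))"
  proof (rule sum.cong)
    fix e assume "e \<in> B"
    then obtain x y where "e = {x,y}" "x \<noteq> y" "x \<in> T" "y \<in> T" unfolding B_def by (auto simp: card_2_iff)
    then show "wt ?d e = Fw (real (card V - 1)) (real (card V - 1))" using dT by (simp add: wt_pair)
  qed simp
  also have "\<dots> = real (card T choose 2) * Fw (real (card V - 1)) (real (card V - 1))"
    using n_subsets[OF finS(2), of 2] unfolding B_def by simp
  finally have SB: "(\<Sum>e\<in>B. wt ?d e) = real (card T choose 2) * Fw (real (card V - 1)) (real (card V - 1))" .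
  have "ABC Ef = (\<Sum>e\<in>A. wt ?d e) + (\<Sum>e\<in>B. wt ?d e)"
    unfolding ABC_wt EfAB using finAB disj by (simp add: sum.union_disjoint)
  then show ?thesis using SA SB unfolding Ef_def T_def by simp
qed



lemma iso_card:
  assumes iso: "graph_iso V E V' E'" and s: "simple_graph V E" and s': "simple_graph V' E'"
  shows "card E = card E'"
proof -
  obtain f where f: "bij_betw f V V'" and fe: "\<forall>u\<in>V. \<forall>v\<in>V. {u, v} \<in> E \<longleftrightarrow> {f u, f v} \<in> E'"
    using iso unfolding graph_iso_def by blast
  have inj: "inj_on f V" and img: "f ` V = V'" using f unfolding bij_betw_def by auto
  have "bij_betw (image f) E E'"
    unfolding bij_betw_def
  proof
    show "inj_on (image f) E"
    proof (rule inj_onI)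
      fix e1 e2 assume e: "e1 \<in> E" "e2 \<in> E" "f ` e1 = f ` e2"
      have "e1 \<subseteq> V" "e2 \<subseteq> V" using sg_edge[OF s e(1)] sg_edge[OF s e(2)] by auto
      then show "e1 = e2" using inj e(3) by (simp add: inj_on_image_eq_iff)
    qed
  next
    show "image f ` E = E'"
    proof
      show "image f ` E \<subseteq> E'"
      proof
        fix e' assume "e' \<in> image f ` E"
        then obtain e where e: "e \<in> E" "e' = f ` e" by blast
        obtain u v where "u \<noteq> v" "u \<in> V" "v \<in> V" "e = {u,v}" using sg_edge[OF s e(1)] by blast
        then show "e' \<in> E'" using fe e by auto
      qed
    next
      show "E' \<subseteq> image f ` E"
      proof
        fix e' assume e': "e' \<in> E'"
        obtain u' v' where uv: "u' \<in> V'" "v' \<in> V'" "e' = {u',v'}" using sg_edge[OF s' e'] by blast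
        obtain u v where w: "u \<in> V" "v \<in> V" "u' = f u" "v' = f v" using uv img by blast
        then have "{u,v} \<in> E" using fe e' uv by simp
        moreover have "e' = f ` {u,v}" using w uv by simp
        ultimately show "e' \<in> image f ` E" by blast
      qed
    qed
  qed
  then show ?thesis by (rule bij_betw_same_card)
qed

abbreviation splitV :: "nat \<Rightarrow> nat \<Rightarrow> (nat + nat) set" where
  "splitV b k \<equiv> join_V (empty_graph_V b) (complete_graph_V k)"
abbreviation splitE :: "nat \<Rightarrow> nat \<Rightarrow> (nat + nat) set set" where
  "splitE b k \<equiv> join_E (empty_graph_V b) (empty_graph_E b) (complete_graph_V k) (complete_graph_E k)"

lemma splitE_eq:
  "splitE b k = {{Inl i, Inr j} | i j. i < b \<and> j < k} \<union> {{Inr p, Inr q} | p q. p < k \<and> q < k \<and> p \<noteq> q}"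
proof -
  have "image Inr ` {{u, v} |u v. u < k \<and> v < k \<and> u \<noteq> v} = {{Inr p, Inr q} | p q. p < k \<and> q < k \<and> p \<noteq> q}"
    (is "?L = ?R")
  proof
    show "?L \<subseteq> ?R"
    proof
      fix X assume "X \<in> ?L"
      then obtain Y where Y: "Y \<in> {{u, v} |u v. u < k \<and> v < k \<and> u \<noteq> v}" "X = image Inr Y" by (rule imageE) simp
      from Y(1) obtain u v where "Y = {u,v}" "u < k" "v < k" "u \<noteq> v" by blast
      then show "X \<in> ?R" using Y(2) by auto
    qed
  next
    show "?R \<subseteq> ?L"
    proof
      fix X assume "X \<in> ?R"
      then obtain p q where pq: "X = {Inr p, Inr q}" "p < k" "q < k" "p \<noteq> q" by blast
      then have "{p,q} \<in> {{u, v} |u v. u < k \<and> v < k \<and> u \<noteq> v}" by blast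
      from imageI[OF this, of "image Inr"] show "X \<in> ?L" using pq by simp
    qed
  qed
  note eq = this
  show ?thesis
    unfolding join_E_def empty_graph_E_def empty_graph_V_def complete_graph_V_def complete_graph_E_def eq
    by auto
qed

lemma splitE_mem:
  "{a, c} \<in> splitE b k \<longleftrightarrow>
     (\<exists>i j. i < b \<and> j < k \<and> {a, c} = {Inl i, Inr j}) \<or>
     (\<exists>p q. p < k \<and> q < k \<and> p \<noteq> q \<and> {a, c} = {Inr p, Inr q})"
  unfolding splitE_eq by blast

lemma sg_split: "simple_graph (splitV b k) (splitE b k)"
  unfolding simple_graph_def splitE_eq
proof (intro conjI ballI)
  show "finite (splitV b k)" unfolding join_V_def empty_graph_V_def complete_graph_V_def by simp
next
  fix e assume "e \<in> {{Inl i, Inr j} | i j. i < b \<and> j < k} \<union> {{Inr p, Inr q} | p q. p < k \<and> q < k \<and> p \<noteq> q}"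
  then show "\<exists>u v. u \<noteq> v \<and> u \<in> splitV b k \<and> v \<in> splitV b k \<and> e = {u, v}"
  proof
    assume "e \<in> {{Inl i, Inr j} | i j. i < b \<and> j < k}"
    then obtain i j where ij: "i < b" "j < k" "e = {Inl i, Inr j}" by blast
    have "Inl i \<in> splitV b k" "Inr j \<in> splitV b k"
      using ij unfolding join_V_def empty_graph_V_def complete_graph_V_def by auto
    then show ?thesis using ij by blast
  next
    assume "e \<in> {{Inr p, Inr q} | p q. p < k \<and> q < k \<and> p \<noteq> q}"
    then obtain p q where pq: "p < k" "q < k" "p \<noteq> q" "e = {Inr p, Inr q}" by blast
    have "Inr p \<in> splitV b k" "Inr q \<in> splitV b k"
      using pq unfolding join_V_def empty_graph_V_def complete_graph_V_def by auto
    then show ?thesis using pq by blast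
  qed
qed


lemma iso_full:
  assumes fin: "finite V" and S: "S \<subseteq> V"
  shows "graph_iso V (full_split V S) (splitV (card S) (card (V - S))) (splitE (card S) (card (V - S)))"
proof -
  let ?b = "card S" let ?k = "card (V - S)"
  have finS: "finite S" "finite (V - S)" using fin S finite_subset by auto
  obtain gS where gS: "bij_betw gS S {0..<?b}" using ex_bij_betw_finite_nat[OF finS(1)] by blast
  obtain gT where gT: "bij_betw gT (V - S) {0..<?k}" using ex_bij_betw_finite_nat[OF finS(2)] by blast
  define f where "f x = (if x \<in> S then Inl (gS x) else Inr (gT x))" for x
  have b1: "bij_betw (Inl \<circ> gS) S (Inl ` {0..<?b} :: (nat + nat) set)"
    by (rule bij_betw_trans[OF gS]) (rule bij_betw_imageI, auto)
  have b2: "bij_betw (Inr \<circ> gT) (V - S) (Inr ` {0..<?k} :: (nat + nat) set)"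
    by (rule bij_betw_trans[OF gT]) (rule bij_betw_imageI, auto)
  have b1': "bij_betw f S (Inl ` {0..<?b})" using b1 by (subst bij_betw_cong[of S f "Inl \<circ> gS"]) (auto simp: f_def)
  have b2': "bij_betw f (V - S) (Inr ` {0..<?k})" using b2 by (subst bij_betw_cong[of "V - S" f "Inr \<circ> gT"]) (auto simp: f_def)
  have "bij_betw f (S \<union> (V - S)) (Inl ` {0..<?b} \<union> Inr ` {0..<?k})"
    by (rule bij_betw_combine[OF b1' b2']) auto
  moreover have "S \<union> (V - S) = V" using S by auto
  ultimately have bf: "bij_betw f V (splitV ?b ?k)"
    unfolding join_V_def empty_graph_V_def complete_graph_V_def by simp
  have gSr: "gS x < ?b" if "x \<in> S" for x using bij_betwE[OF gS] that by auto
  have gTr: "gT x < ?k" if "x \<in> V - S" for x using bij_betwE[OF gT] that by auto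
  have gTi: "gT x = gT y \<longleftrightarrow> x = y" if "x \<in> V - S" "y \<in> V - S" for x y
    using bij_betw_imp_inj_on[OF gT] that by (auto simp: inj_on_def)
  have edge: "{u, v} \<in> full_split V S \<longleftrightarrow> {f u, f v} \<in> splitE ?b ?k" if uv: "u \<in> V" "v \<in> V" for u v
  proof (cases "u \<in> S")
    case uS: True
    show ?thesis
    proof (cases "v \<in> S")
      case True
      then show ?thesis using uS uv full_mem[of u V v S] splitE_mem[of "f u" "f v" ?b ?k]
        by (auto simp: f_def doubleton_eq_iff)
    next
      case False
      have "u \<noteq> v" using uS False by auto
      moreover have "{f u, f v} = {Inl (gS u), Inr (gT v)}" using uS False by (simp add: f_def)
      ultimately show ?thesis using uS False uv full_mem[of u V v S] splitE_mem[of "f u" "f v" ?b ?k]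
        gSr[OF uS] gTr[of v] by auto
    qed
  next
    case uT: False
    show ?thesis
    proof (cases "v \<in> S")
      case True
      have "u \<noteq> v" using uT True by auto
      moreover have "{f u, f v} = {Inl (gS v), Inr (gT u)}" using uT True by (auto simp: f_def)
      ultimately show ?thesis using uT True uv full_mem[of u V v S] splitE_mem[of "f u" "f v" ?b ?k]
        gSr[OF True] gTr[of u] by auto
    next
      case False
      have fe: "{f u, f v} = {Inr (gT u), Inr (gT v)}" using uT False by (simp add: f_def)
      have "{f u, f v} \<in> splitE ?b ?k \<longleftrightarrow> gT u \<noteq> gT v"
        unfolding fe splitE_mem using gTr[of u] gTr[of v] uv uT False by (auto simp: doubleton_eq_iff)
      then show ?thesis using gTi[of u v] uv uT False full_mem[of u V v S] by auto
    qed
  qed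
  show ?thesis unfolding graph_iso_def using bf edge by blast
qed



lemma choose2_real: "real (k choose 2) = real k * (real k - 1) / 2"
  by (induction k) (auto simp: numeral_2_eq_2 field_simps)

theorem theorem2p2:
  fixes V :: "'a set" and E :: "'a set set"
  assumes "simple_graph V E" and "connected_graph V E"
  defines "n \<equiv> card V" and "\<beta> \<equiv> independence_number V E"
  shows "ABC E \<le> real \<beta> * (real n - real \<beta>) *
            sqrt ((2 * real n - real \<beta> - 3) / ((real n - real \<beta>) * (real n - 1)))
          + (real n - real \<beta>) * (real n - real \<beta> - 1) / 2 *
            sqrt ((2 * real n - 4) / ((real n - 1) * (real n - 1)))
       \<and> (ABC E = real \<beta> * (real n - real \<beta>) *
            sqrt ((2 * real n - real \<beta> - 3) / ((real n - real \<beta>) * (real n - 1)))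
          + (real n - real \<beta>) * (real n - real \<beta> - 1) / 2 *
            sqrt ((2 * real n - 4) / ((real n - 1) * (real n - 1)))
         \<longleftrightarrow> graph_iso V E
               (join_V (empty_graph_V \<beta>) (complete_graph_V (n - \<beta>)))
               (join_E (empty_graph_V \<beta>) (empty_graph_E \<beta>)
                       (complete_graph_V (n - \<beta>)) (complete_graph_E (n - \<beta>))))"
    (is "ABC E \<le> ?R \<and> (ABC E = ?R \<longleftrightarrow> ?iso)")
proof -
  note s = assms(1) and c = assms(2)
  have finV: "finite V" and Vne: "V \<noteq> {}" using s c unfolding simple_graph_def connected_graph_def by auto
  obtain S where iS: "independent_set V E S" and cS: "card S = \<beta>"
    using indep_max[OF s] unfolding \<beta>_def by blast
  have SV: "S \<subseteq> V" using iS unfolding independent_set_def by blast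
  have finS: "finite S" using finV SV finite_subset by auto
  have n1: "n \<ge> 1" using finV Vne unfolding n_def by (simp add: Suc_leI card_gt_0_iff)
  have bn: "\<beta> \<le> n" using card_mono[OF finV SV] cS unfolding n_def by simp
  have kT: "card (V - S) = n - \<beta>" using card_Diff_subset[OF finS SV] cS unfolding n_def by simp
  define Ef where "Ef = full_split V S"
  have sub: "E \<subseteq> Ef" unfolding Ef_def by (rule E_sub_full[OF s iS])
  have sgf: "simple_graph V Ef" unfolding Ef_def by (rule sg_full[OF finV])
  have finEf: "finite Ef" using sg_finite[OF sgf] .
  have ABCf: "ABC Ef = ?R"
  proof -
    have rk: "real (n - \<beta>) = real n - real \<beta>" using bn by simp
    have rn: "real (n - 1) = real n - 1" using n1 by simp
    have h1: "Fw (real n - real \<beta>) (real n - 1) =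
        sqrt ((2 * real n - real \<beta> - 3) / ((real n - real \<beta>) * (real n - 1)))"
      unfolding Fw_def by (simp add: algebra_simps)
    have h2: "Fw (real n - 1) (real n - 1) = sqrt ((2 * real n - 4) / ((real n - 1) * (real n - 1)))"
      unfolding Fw_def by (simp add: algebra_simps)
    have "ABC Ef = real \<beta> * real (n - \<beta>) * Fw (real (n - \<beta>)) (real (n - 1))
        + real ((n - \<beta>) choose 2) * Fw (real (n - 1)) (real (n - 1))"
      using ABC_full[OF finV SV] unfolding Ef_def kT cS n_def .
    also have "\<dots> = ?R" unfolding rk rn h1 h2 choose2_real by (simp add: algebra_simps)
    finally show ?thesis .
  qed
  have isof: "?iso" if "E = Ef"
    using iso_full[OF finV SV] that unfolding Ef_def kT cS by simp
  show ?thesis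
  proof (cases "E = Ef")
    case True
    then show ?thesis using ABCf isof by simp
  next
    case False
    then obtain e where e: "e \<in> Ef" "e \<notin> E" using sub by blast
    obtain x0 y0 where xy0: "x0 \<noteq> y0" "x0 \<in> V" "y0 \<in> V" using sg_edge[OF sgf e(1)] by blast
    have deg: "\<forall>x\<in>V. degree E x \<ge> 1"
    proof
      fix x assume x: "x \<in> V"
      show "degree E x \<ge> 1"
      proof (cases "x = x0")
        case True then show ?thesis using conn_deg[OF s c x xy0(3)] xy0 by simp
      next
        case False then show ?thesis using conn_deg[OF s c x xy0(2)] by simp
      qed
    qed
    have lt: "ABC E < ?R" using abc_mono_full[OF sgf s sub deg False] ABCf by simp
    have "\<not> ?iso"
    proof
      assume iso: ?iso
      have "card E = card (splitE \<beta> (n - \<beta>))" by (rule iso_card[OF iso s sg_split])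
      moreover have "card Ef = card (splitE \<beta> (n - \<beta>))"
        using iso_card[OF iso_full[OF finV SV] sg_full[OF finV] sg_split] unfolding Ef_def kT cS .
      ultimately have "card E = card Ef" by simp
      then have "E = Ef" using card_subset_eq[OF finEf sub] by simp
      then show False using False by simp
    qed
    then show ?thesis using lt by simp
  qed
qed


end
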